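(* Let $\mathcal F=(A,X,f)$ and $\mathcal G=(B,X,g)$ be fuzzy automata and let $\varphi:\mathcal F\to\mathcal G$ be an epimorphism. Then $\varphi(\mathcal F(a,w))=\mathcal G(\varphi(a),w)$ for all $a\in A$ and $w\in X^*$.
   Context: A fuzzy automaton is a triple $\mathcal F=(A,X,f)$ with $A$ a finite nonempty set of states, $X$ a finite nonempty alphabet, and $f:A\times X\times A\to[0,1]$, extended to words by $f^*(a,\varepsilon,a)=1$, $f^*(a,\varepsilon,b)=0$ ($b\neq a$), $f^*(a,vx,b)=\max_{c\in A}\min\{f^*(a,v,c),f(c,x,b)\}$ (and similarly $g^*$ for $\mathcal G$). Let $\mathcal F(a,w)=\{b\in A\mid f^*(a,w,b)>0\}$. A mapping $\varphi:A\to B$ is a homomorphism $\mathcal F\to\mathcal G$ if $g(\varphi(a),x,b)=\max\{f(a,x,a')\mid a'\in A,\ \varphi(a')=b\}$ for all $a\in A$, $b\in B$, $x\in X$ (the maximum of the empty set being $0$); it is an epimorphism if it is moreover surjective. *)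

theory Defs
  imports Complex_Main
begin

definition fuzzy_automaton :: "'a set \<Rightarrow> 'x set \<Rightarrow> ('a \<Rightarrow> 'x \<Rightarrow> 'a \<Rightarrow> real) \<Rightarrow> bool" where
  "fuzzy_automaton A X f \<longleftrightarrow> finite A \<and> A \<noteq> {} \<and> finite X \<and> X \<noteq> {} \<and>
     (\<forall>a\<in>A. \<forall>x\<in>X. \<forall>b\<in>A. 0 \<le> f a x b \<and> f a x b \<le> 1)"

text \<open>Auxiliary: extension on the reversed word, so that the recursion
f*(a, v x, b) = max_c min (f*(a,v,c), f(c,x,b)) is structural.\<close>

fun fstar_rev :: "'a set \<Rightarrow> ('a \<Rightarrow> 'x \<Rightarrow> 'a \<Rightarrow> real) \<Rightarrow> 'a \<Rightarrow> 'x list \<Rightarrow> 'a \<Rightarrow> real" where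
  "fstar_rev A f a [] b = (if a = b then 1 else 0)"
| "fstar_rev A f a (x # rv) b = Max ((\<lambda>c. min (fstar_rev A f a rv c) (f c x b)) ` A)"

definition fstar :: "'a set \<Rightarrow> ('a \<Rightarrow> 'x \<Rightarrow> 'a \<Rightarrow> real) \<Rightarrow> 'a \<Rightarrow> 'x list \<Rightarrow> 'a \<Rightarrow> real" where
  "fstar A f a w b = fstar_rev A f a (rev w) b"

lemma fstar_Nil: "fstar A f a [] b = (if a = b then 1 else 0)"
  by (simp add: fstar_def)

lemma fstar_snoc:
  "fstar A f a (v @ [x]) b = Max ((\<lambda>c. min (fstar A f a v c) (f c x b)) ` A)"
  by (simp add: fstar_def)

definition reach :: "'a set \<Rightarrow> ('a \<Rightarrow> 'x \<Rightarrow> 'a \<Rightarrow> real) \<Rightarrow> 'a \<Rightarrow> 'x list \<Rightarrow> 'a set" where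
  "reach A f a w = {b \<in> A. fstar A f a w b > 0}"

definition fa_hom ::
  "'a set \<Rightarrow> 'x set \<Rightarrow> ('a \<Rightarrow> 'x \<Rightarrow> 'a \<Rightarrow> real) \<Rightarrow>
   'b set \<Rightarrow> ('b \<Rightarrow> 'x \<Rightarrow> 'b \<Rightarrow> real) \<Rightarrow> ('a \<Rightarrow> 'b) \<Rightarrow> bool" where
  "fa_hom A X f B g \<phi> \<longleftrightarrow> \<phi> ` A \<subseteq> B \<and>
     (\<forall>a\<in>A. \<forall>b\<in>B. \<forall>x\<in>X.
        g (\<phi> a) x b = (let S = {a'\<in>A. \<phi> a' = b} in
                         if S = {} then 0 else Max ((\<lambda>a'. f a x a') ` S)))"

definition fa_epi ::
  "'a set \<Rightarrow> 'x set \<Rightarrow> ('a \<Rightarrow> 'x \<Rightarrow> 'a \<Rightarrow> real) \<Rightarrow>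
   'b set \<Rightarrow> ('b \<Rightarrow> 'x \<Rightarrow> 'b \<Rightarrow> real) \<Rightarrow> ('a \<Rightarrow> 'b) \<Rightarrow> bool" where
  "fa_epi A X f B g \<phi> \<longleftrightarrow> fa_hom A X f B g \<phi> \<and> \<phi> ` A = B"

end

theory Submission
  imports Defs
begin

lemma Max_img_pos:
  assumes "finite S" "S \<noteq> {}"
  shows "(0::real) < Max (h ` S) \<longleftrightarrow> (\<exists>s\<in>S. 0 < h s)"
  using assms by (simp add: Max_gr_iff)

lemma fstar_snoc_pos:
  assumes "finite A" "A \<noteq> {}"
  shows "0 < fstar A f a (v @ [x]) b \<longleftrightarrow> (\<exists>c\<in>A. 0 < fstar A f a v c \<and> 0 < f c x b)"
  using assms by (simp add: fstar_snoc Max_img_pos)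

theorem lemma6p3:
  fixes A :: "'a set" and B :: "'b set" and X :: "'x set"
    and f :: "'a \<Rightarrow> 'x \<Rightarrow> 'a \<Rightarrow> real" and g :: "'b \<Rightarrow> 'x \<Rightarrow> 'b \<Rightarrow> real"
    and \<phi> :: "'a \<Rightarrow> 'b"
  assumes "fuzzy_automaton A X f" and "fuzzy_automaton B X g"
    and "fa_epi A X f B g \<phi>"
    and "a \<in> A" and "set w \<subseteq> X"
  shows "\<phi> ` reach A f a w = reach B g (\<phi> a) w"
proof -
  have fA: "finite A" "A \<noteq> {}" using assms(1) by (auto simp: fuzzy_automaton_def)
  have fB: "finite B" "B \<noteq> {}" using assms(2) by (auto simp: fuzzy_automaton_def)
  have img: "\<phi> ` A = B" using assms(3) by (simp add: fa_epi_def)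
  have hom: "\<And>a'' b' x. a'' \<in> A \<Longrightarrow> b' \<in> B \<Longrightarrow> x \<in> X \<Longrightarrow>
      0 < g (\<phi> a'') x b' \<longleftrightarrow> (\<exists>a'\<in>A. \<phi> a' = b' \<and> 0 < f a'' x a')"
  proof -
    fix a'' b' x assume h: "a'' \<in> A" "b' \<in> B" "x \<in> X"
    have eq: "g (\<phi> a'') x b' = (let S = {a'\<in>A. \<phi> a' = b'} in
                         if S = {} then 0 else Max ((\<lambda>a'. f a'' x a') ` S))"
      using assms(3) h by (simp add: fa_epi_def fa_hom_def)
    have ne: "{a'\<in>A. \<phi> a' = b'} \<noteq> {}" using h(2) img by auto
    have fin: "finite {a'\<in>A. \<phi> a' = b'}" using fA by simp
    show "0 < g (\<phi> a'') x b' \<longleftrightarrow> (\<exists>a'\<in>A. \<phi> a' = b' \<and> 0 < f a'' x a')"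
      proof -
      have "g (\<phi> a'') x b' = Max ((\<lambda>a'. f a'' x a') ` {a'\<in>A. \<phi> a' = b'})"
        using eq ne by (simp only: Let_def if_False)
      then have "0 < g (\<phi> a'') x b' \<longleftrightarrow> 0 < Max ((\<lambda>a'. f a'' x a') ` {a'\<in>A. \<phi> a' = b'})" by (simp only:)
      also have "\<dots> \<longleftrightarrow> (\<exists>s\<in>{a'\<in>A. \<phi> a' = b'}. 0 < f a'' x s)" by (rule Max_img_pos[OF fin ne])
      also have "\<dots> \<longleftrightarrow> (\<exists>a'\<in>A. \<phi> a' = b' \<and> 0 < f a'' x a')" by blast
      finally show ?thesis .
    qed
  qed
  have main: "\<forall>b'\<in>B. 0 < fstar B g (\<phi> a) w b' \<longleftrightarrow> (\<exists>a'\<in>A. \<phi> a' = b' \<and> 0 < fstar A f a w a')"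
    using assms(5)
  proof (induction w rule: rev_induct)
    case Nil
    show ?case
    proof
      fix b' assume "b' \<in> B"
      show "0 < fstar B g (\<phi> a) [] b' \<longleftrightarrow> (\<exists>a'\<in>A. \<phi> a' = b' \<and> 0 < fstar A f a [] a')"
        using assms(4) unfolding fstar_Nil by auto
    qed
  next
    case (snoc x v)
    have IH: "\<forall>b'\<in>B. 0 < fstar B g (\<phi> a) v b' \<longleftrightarrow> (\<exists>a'\<in>A. \<phi> a' = b' \<and> 0 < fstar A f a v a')"
      using snoc.IH snoc.prems by simp
    have xX: "x \<in> X" using snoc.prems by auto
    show ?case
    proof
      fix b' assume b': "b' \<in> B"
      show "0 < fstar B g (\<phi> a) (v @ [x]) b' \<longleftrightarrow> (\<exists>a'\<in>A. \<phi> a' = b' \<and> 0 < fstar A f a (v @ [x]) a')"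
      proof
        assume "0 < fstar B g (\<phi> a) (v @ [x]) b'"
        then obtain c where c: "c \<in> B" "0 < fstar B g (\<phi> a) v c" "0 < g c x b'"
          using fstar_snoc_pos[OF fB, of g "\<phi> a" v x b'] by blast
        then obtain a'' where a'': "a'' \<in> A" "\<phi> a'' = c" "0 < fstar A f a v a''" using IH[rule_format, OF c(1)] by blast
        then obtain a' where "a' \<in> A" "\<phi> a' = b'" "0 < f a'' x a'"
          using hom[OF a''(1) b' xX] c by blast
        then show "\<exists>a'\<in>A. \<phi> a' = b' \<and> 0 < fstar A f a (v @ [x]) a'"
          using fstar_snoc_pos[OF fA, of f a v x] a'' by blast
      next
        assume "\<exists>a'\<in>A. \<phi> a' = b' \<and> 0 < fstar A f a (v @ [x]) a'"
        then obtain a' a'' where a': "a' \<in> A" "\<phi> a' = b'" "a'' \<in> A" "0 < fstar A f a v a''"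
          "0 < f a'' x a'"
          using fstar_snoc_pos[OF fA, of f a v x] by blast
        have c: "\<phi> a'' \<in> B" using img a' by auto
        have "0 < fstar B g (\<phi> a) v (\<phi> a'')" using IH[rule_format, OF c] a' by blast
        moreover have "0 < g (\<phi> a'') x b'" using hom[OF a'(3) b' xX] a' by blast
        ultimately show "0 < fstar B g (\<phi> a) (v @ [x]) b'"
          using fstar_snoc_pos[OF fB, of g "\<phi> a" v x b'] c by blast
      qed
    qed
  qed
  show ?thesis
  proof
    show "\<phi> ` reach A f a w \<subseteq> reach B g (\<phi> a) w"
    proof
      fix y assume "y \<in> \<phi> ` reach A f a w"
      then obtain a' where a': "a' \<in> A" "0 < fstar A f a w a'" "y = \<phi> a'"
        unfolding reach_def by blast
      have "y \<in> B" using img a' by blast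
      then show "y \<in> reach B g (\<phi> a) w" using main a' unfolding reach_def by blast
    qed
    show "reach B g (\<phi> a) w \<subseteq> \<phi> ` reach A f a w"
    proof
      fix y assume "y \<in> reach B g (\<phi> a) w"
      then have y: "y \<in> B" "0 < fstar B g (\<phi> a) w y" unfolding reach_def by blast+
      then obtain a' where "a' \<in> A" "\<phi> a' = y" "0 < fstar A f a w a'" using main by blast
      then show "y \<in> \<phi> ` reach A f a w" unfolding reach_def by blast
    qed
  qed
qed

end
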